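(* Let $x_1,\dots,x_n,y_1,\dots,y_m$ be independent indeterminates over $\mathbb Z$, and let $\sigma_\ell(\mathbf x)$, $\sigma_j(\mathbf y)$ denote the elementary symmetric polynomials in the $x_i$, respectively the $y_j$. Then there exist $nm\times nm$ matrices $A$ and $B$, where every entry of $A$ is an integer polynomial in $\sigma_1(\mathbf x),\dots,\sigma_n(\mathbf x)$ and every entry of $B$ is an integer polynomial in $\sigma_1(\mathbf y),\dots,\sigma_m(\mathbf y)$, such that $$\prod_{i=1}^n\prod_{j=1}^m (t-x_iy_j)=\det(tI-AB).$$
   Context: The elementary symmetric polynomials $\sigma_\ell(x_1,\dots,x_n)$ are defined by $\prod_{k=1}^n(t+x_k)=\sum_{\ell=0}^n\sigma_\ell(x_1,\dots,x_n)t^{n-\ell}$. *)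

theory Defs
  imports "HOL-Computational_Algebra.Polynomial" "Jordan_Normal_Form.Determinant"
begin

text \<open>Elementary symmetric polynomial sigma_l(x_1,...,x_n), exactly as in the context:
  prod_{k=1}^n (t + x_k) = sum_{l=0}^n sigma_l t^(n-l).  Meaningful for l \<le> n.\<close>
definition esym :: "nat \<Rightarrow> (nat \<Rightarrow> 'a::comm_ring_1) \<Rightarrow> nat \<Rightarrow> 'a" where
  "esym n x l = coeff (\<Prod>k=1..n. [:x k, 1:]) (n - l)"

datatype ipoly = Const int | Var nat | Add ipoly ipoly | Mul ipoly ipoly

fun ieval :: "(nat \<Rightarrow> 'a::comm_ring_1) \<Rightarrow> ipoly \<Rightarrow> 'a" where
  "ieval env (Const c) = of_int c"
| "ieval env (Var k) = env k"
| "ieval env (Add p q) = ieval env p + ieval env q"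
| "ieval env (Mul p q) = ieval env p * ieval env q"

fun ivars :: "ipoly \<Rightarrow> nat set" where
  "ivars (Const c) = {}"
| "ivars (Var k) = {k}"
| "ivars (Add p q) = ivars p \<union> ivars q"
| "ivars (Mul p q) = ivars p \<union> ivars q"

end

theory Submission
  imports Defs
begin

definition epoly :: "(nat \<Rightarrow> int) \<Rightarrow> nat \<Rightarrow> int poly" where
  "epoly x k = (\<Prod>i=1..k. [:x i, 1:])"

definition Pm :: "nat \<Rightarrow> (nat \<Rightarrow> int) \<Rightarrow> int mat" where
  "Pm n x = mat n n (\<lambda>(a,b). coeff (epoly x b) a)"

definition Tm :: "nat \<Rightarrow> (nat \<Rightarrow> int) \<Rightarrow> int mat" where
  "Tm n x = mat n n (\<lambda>(a,b). if a = b then - x (b+1) else if a = b+1 then 1 else 0)"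

definition Cm :: "nat \<Rightarrow> (nat \<Rightarrow> int) \<Rightarrow> int mat" where
  "Cm n x = mat n n (\<lambda>(a,b). if b = n-1 then - coeff (epoly x n) a else if a = b+1 then 1 else 0)"

lemma epoly_Suc: "epoly x (Suc k) = epoly x k * [:x (Suc k), 1:]"
  unfolding epoly_def by (simp add: prod.cl_ivl_Suc)

lemma epoly_monic: "degree (epoly x k) = k \<and> coeff (epoly x k) k = 1"
proof (induction k)
  case 0 then show ?case by (simp add: epoly_def)
next
  case (Suc k)
  have ne: "epoly x k \<noteq> 0" using Suc by auto
  have "degree (epoly x (Suc k)) = Suc k"
    using Suc ne degree_mult_eq[of "epoly x k" "[:x (Suc k),1:]"] unfolding epoly_Suc by simp
  moreover have "coeff (epoly x (Suc k)) (Suc k) = 1"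
    using Suc ne coeff_mult_degree_sum[of "epoly x k" "[:x (Suc k),1:]"] unfolding epoly_Suc by simp
  ultimately show ?case by simp
qed

lemma epoly_high: "a > k \<Longrightarrow> coeff (epoly x k) a = 0"
  using epoly_monic[of x k] by (simp add: coeff_eq_0)

lemma coeff_epoly_Suc:
  "coeff (epoly x (Suc k)) a = x (Suc k) * coeff (epoly x k) a + (if a = 0 then 0 else coeff (epoly x k) (a - 1))"
  unfolding epoly_Suc by (cases a) (auto simp: mult_pCons_right coeff_pCons)

lemma epoly_coeff_top:
  assumes "b < n"
  shows "coeff (epoly x b) (n - 1) = (if b = n - 1 then 1 else 0)"
  using epoly_monic[of x b] epoly_high[of b "n-1" x] assms by auto

lemma Cm_carrier[simp]: "Cm n x \<in> carrier_mat n n" unfolding Cm_def by simp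
lemma Pm_carrier[simp]: "Pm n x \<in> carrier_mat n n" unfolding Pm_def by simp
lemma Tm_carrier[simp]: "Tm n x \<in> carrier_mat n n" unfolding Tm_def by simp

lemma CP_entry:
  assumes "a < n" "b < n"
  shows "(\<Sum>c\<in>{0..<n}. (if c = n-1 then - coeff (epoly x n) a else if a = c+1 then 1 else 0) * coeff (epoly x b) c)
    = (if a = 0 then 0 else coeff (epoly x b) (a - 1)) - coeff (epoly x n) a * coeff (epoly x b) (n - 1)"
proof -
  have n: "{0..<n} = insert (n-1) {0..<n-1}" using assms by auto
  have "(\<Sum>c\<in>{0..<n-1}. (if c = n-1 then - coeff (epoly x n) a else if a = c+1 then 1 else 0) * coeff (epoly x b) c)
      = (\<Sum>c\<in>{0..<n-1}. if c = a - 1 then (if a = 0 then 0 else coeff (epoly x b) c) else 0)"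
    by (rule sum.cong) auto
  also have "\<dots> = (if a = 0 then 0 else coeff (epoly x b) (a - 1))"
    using assms by (subst sum.delta) auto
  finally show ?thesis unfolding n by simp
qed

lemma PT_entry:
  assumes "a < n" "b < n"
  shows "(\<Sum>c\<in>{0..<n}. coeff (epoly x c) a * (if c = b then - x (b+1) else if c = b+1 then 1 else 0))
    = coeff (epoly x b) a * (- x (b+1)) + (if b + 1 < n then coeff (epoly x (b+1)) a else 0)"
proof -
  have "(\<Sum>c\<in>{0..<n}. coeff (epoly x c) a * (if c = b then - x (b+1) else if c = b+1 then 1 else 0))
    = (\<Sum>c\<in>{0..<n}. (if c = b then coeff (epoly x c) a * (- x (b+1)) else 0) + (if c = b+1 then coeff (epoly x c) a else 0))"
    by (rule sum.cong) auto
  also have "\<dots> = coeff (epoly x b) a * (- x (b+1)) + (if b + 1 < n then coeff (epoly x (b+1)) a else 0)"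
    using assms by (simp add: sum.distrib)
  finally show ?thesis .
qed

lemma CP_eq: "Cm n x * Pm n x = Pm n x * Tm n x"
proof (rule eq_matI)
  fix a b assume a: "a < dim_row (Pm n x * Tm n x)" and b: "b < dim_col (Pm n x * Tm n x)"
  hence ab: "a < n" "b < n" by (auto simp: Pm_def Tm_def)
  have L: "(Cm n x * Pm n x) $$ (a,b) = (if a = 0 then 0 else coeff (epoly x b) (a - 1)) - coeff (epoly x n) a * coeff (epoly x b) (n - 1)"
  proof -
    have "(Cm n x * Pm n x) $$ (a,b) = (\<Sum>c\<in>{0..<n}. (if c = n-1 then - coeff (epoly x n) a else if a = c+1 then 1 else 0) * coeff (epoly x b) c)"
      using ab by (simp add: Cm_def Pm_def scalar_prod_def)
    also note CP_entry[OF ab]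
    finally show ?thesis .
  qed
  have R: "(Pm n x * Tm n x) $$ (a,b) = coeff (epoly x b) a * (- x (b+1)) + (if b + 1 < n then coeff (epoly x (b+1)) a else 0)"
  proof -
    have "(Pm n x * Tm n x) $$ (a,b) = (\<Sum>c\<in>{0..<n}. coeff (epoly x c) a * (if c = b then - x (b+1) else if c = b+1 then 1 else 0))"
      using ab by (simp add: Tm_def Pm_def scalar_prod_def)
    also note PT_entry[OF ab]
    finally show ?thesis .
  qed
  show "(Cm n x * Pm n x) $$ (a,b) = (Pm n x * Tm n x) $$ (a,b)"
  proof (cases "b + 1 < n")
    case True
    then show ?thesis unfolding L R using ab epoly_coeff_top[of b n x]
      by (simp add: coeff_epoly_Suc[simplified])
  next
    case False
    then have bn: "n = Suc b" using ab by auto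
    show ?thesis unfolding L R using ab epoly_coeff_top[of b n x] bn
      by (simp add: coeff_epoly_Suc)
  qed
qed (auto simp: Cm_def Pm_def Tm_def)


definition kron :: "nat \<Rightarrow> nat \<Rightarrow> int mat \<Rightarrow> int mat \<Rightarrow> int mat" where
  "kron n m X Y = mat (n*m) (n*m) (\<lambda>(r,s). X $$ (r div m, s div m) * Y $$ (r mod m, s mod m))"

lemma kron_carrier[simp]: "kron n m X Y \<in> carrier_mat (n*m) (n*m)" unfolding kron_def by simp

lemma sum_split_divmod:
  fixes f :: "nat \<Rightarrow> nat \<Rightarrow> 'b::comm_monoid_add"
  assumes "m > 0"
  shows "(\<Sum>u\<in>{0..<n*m}. f (u div m) (u mod m)) = (\<Sum>a\<in>{0..<n}. \<Sum>b\<in>{0..<m}. f a b)"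
proof -
  have "(\<Sum>u\<in>{0..<n*m}. f (u div m) (u mod m)) = (\<Sum>p\<in>{0..<n}\<times>{0..<m}. f (fst p) (snd p))"
  proof (rule sum.reindex_bij_witness[where i = "\<lambda>p. fst p * m + snd p" and j = "\<lambda>u. (u div m, u mod m)"])
    fix u assume "u \<in> {0..<n*m}"
    then show "(u div m, u mod m) \<in> {0..<n}\<times>{0..<m}" using assms
      by (auto simp: less_mult_imp_div_less)
  next
    fix p :: "nat \<times> nat" assume "p \<in> {0..<n}\<times>{0..<m}"
    then obtain a b where p: "p = (a,b)" "a < n" "b < m" by auto
    have "a * m + b < n * m"
    proof -
      have "a * m + b < a * m + m" using p by simp
      also have "\<dots> = (a+1)*m" by simp
      also have "\<dots> \<le> n * m" using p by (intro mult_right_mono) auto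
      finally show ?thesis .
    qed
    then show "fst p * m + snd p \<in> {0..<n*m}" using p by simp
  qed auto
  also have "\<dots> = (\<Sum>a\<in>{0..<n}. \<Sum>b\<in>{0..<m}. f a b)"
    by (simp add: sum.cartesian_product split_def)
  finally show ?thesis .
qed

lemma prod_split_divmod:
  fixes f :: "nat \<Rightarrow> nat \<Rightarrow> 'b::comm_monoid_mult"
  assumes "m > 0"
  shows "(\<Prod>u\<in>{0..<n*m}. f (u div m) (u mod m)) = (\<Prod>a\<in>{0..<n}. \<Prod>b\<in>{0..<m}. f a b)"
proof -
  have "(\<Prod>u\<in>{0..<n*m}. f (u div m) (u mod m)) = (\<Prod>p\<in>{0..<n}\<times>{0..<m}. f (fst p) (snd p))"
  proof (rule prod.reindex_bij_witness[where i = "\<lambda>p. fst p * m + snd p" and j = "\<lambda>u. (u div m, u mod m)"])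
    fix u assume "u \<in> {0..<n*m}"
    then show "(u div m, u mod m) \<in> {0..<n}\<times>{0..<m}" using assms
      by (auto simp: less_mult_imp_div_less)
  next
    fix p :: "nat \<times> nat" assume "p \<in> {0..<n}\<times>{0..<m}"
    then obtain a b where p: "p = (a,b)" "a < n" "b < m" by auto
    have "a * m + b < n * m"
    proof -
      have "a * m + b < a * m + m" using p by simp
      also have "\<dots> = (a+1)*m" by simp
      also have "\<dots> \<le> n * m" using p by (intro mult_right_mono) auto
      finally show ?thesis .
    qed
    then show "fst p * m + snd p \<in> {0..<n*m}" using p by simp
  qed auto
  also have "\<dots> = (\<Prod>a\<in>{0..<n}. \<Prod>b\<in>{0..<m}. f a b)"
    by (simp add: prod.cartesian_product split_def)
  finally show ?thesis .
qed


lemma kron_mult: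
  assumes X: "X \<in> carrier_mat n n" "X' \<in> carrier_mat n n"
    and Y: "Y \<in> carrier_mat m m" "Y' \<in> carrier_mat m m" and m: "m > 0"
  shows "kron n m X Y * kron n m X' Y' = kron n m (X*X') (Y*Y')"
proof (rule eq_matI)
  fix r s assume "r < dim_row (kron n m (X*X') (Y*Y'))" "s < dim_col (kron n m (X*X') (Y*Y'))"
  hence rs: "r < n*m" "s < n*m" by (auto simp: kron_def)
  hence rs': "r div m < n" "s div m < n" by (auto simp: less_mult_imp_div_less)
  have ms: "r mod m < m" "s mod m < m" using m by auto
  have "(kron n m X Y * kron n m X' Y') $$ (r,s)
     = (\<Sum>u\<in>{0..<n*m}. (X $$ (r div m, u div m) * Y $$ (r mod m, u mod m)) * (X' $$ (u div m, s div m) * Y' $$ (u mod m, s mod m)))"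
    using rs by (simp add: kron_def scalar_prod_def)
  also have "\<dots> = (\<Sum>a\<in>{0..<n}. \<Sum>b\<in>{0..<m}. (X $$ (r div m, a) * Y $$ (r mod m, b)) * (X' $$ (a, s div m) * Y' $$ (b, s mod m)))"
    by (rule sum_split_divmod[OF m, where f = "\<lambda>a b. (X $$ (r div m, a) * Y $$ (r mod m, b)) * (X' $$ (a, s div m) * Y' $$ (b, s mod m))"])
  also have "\<dots> = (\<Sum>a\<in>{0..<n}. X $$ (r div m, a) * X' $$ (a, s div m)) * (\<Sum>b\<in>{0..<m}. Y $$ (r mod m, b) * Y' $$ (b, s mod m))"
    by (simp add: sum_product mult_ac)
  also have "\<dots> = kron n m (X*X') (Y*Y') $$ (r,s)"
    using rs rs' ms X Y by (simp add: kron_def scalar_prod_def)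
  finally show "(kron n m X Y * kron n m X' Y') $$ (r,s) = kron n m (X*X') (Y*Y') $$ (r,s)" .
qed (auto simp: kron_def)



lemma divmod_lt:
  assumes "(j::nat) < i"
  shows "j div m < i div m \<or> (j div m = i div m \<and> j mod m < i mod m)"
proof (cases "j div m = i div m")
  case True
  have e1: "j = i div m * m + j mod m" using True div_mult_mod_eq[of j m] by metis
  have e2: "i = i div m * m + i mod m" using div_mult_mod_eq[of i m] by metis
  show ?thesis using e1 e2 assms True by linarith
next
  case False
  then show ?thesis using div_le_mono[of j i m] assms by simp
qed

lemma kron_index[simp]: "i < n*m \<Longrightarrow> j < n*m \<Longrightarrow> kron n m X Y $$ (i,j) = X $$ (i div m, j div m) * Y $$ (i mod m, j mod m)"
  by (simp add: kron_def)

lemma kron_dim[simp]: "dim_row (kron n m X Y) = n*m" "dim_col (kron n m X Y) = n*m"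
  by (simp_all add: kron_def)

lemma Pm_index[simp]: "a < n \<Longrightarrow> b < n \<Longrightarrow> Pm n x $$ (a,b) = coeff (epoly x b) a"
  by (simp add: Pm_def)

lemma Tm_index[simp]: "a < n \<Longrightarrow> b < n \<Longrightarrow> Tm n x $$ (a,b) = (if a = b then - x (b+1) else if a = b+1 then 1 else 0)"
  by (simp add: Tm_def)

lemma div_mod_bounds: "(i::nat) < n*m \<Longrightarrow> i div m < n \<and> i mod m < m"
  by (cases "m = 0") (auto simp: less_mult_imp_div_less)

lemma det_kron_P:
  shows "det (kron n m (Pm n x) (Pm m y)) = 1"
proof -
  have "det (kron n m (Pm n x) (Pm m y)) = prod_list (diag_mat (kron n m (Pm n x) (Pm m y)))"
  proof (rule det_upper_triangular[of _ "n*m"])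
    show "upper_triangular (kron n m (Pm n x) (Pm m y))"
    proof (rule upper_triangularI)
      fix i j assume ij: "j < i" "i < dim_row (kron n m (Pm n x) (Pm m y))"
      hence i: "i < n*m" and j: "j < n*m" by auto
      note b = div_mod_bounds[OF i] div_mod_bounds[OF j]
      from divmod_lt[OF ij(1), of m] show "kron n m (Pm n x) (Pm m y) $$ (i, j) = 0"
      proof
        assume "j div m < i div m"
        then show ?thesis using i j b by (simp add: epoly_high)
      next
        assume "j div m = i div m \<and> j mod m < i mod m"
        then show ?thesis using i j b by (simp add: epoly_high)
      qed
    qed
  qed simp
  also have "\<dots> = 1"
    unfolding prod_list_diag_prod
  proof (rule prod.neutral, rule ballI)
    fix i assume "i \<in> {0..<dim_row (kron n m (Pm n x) (Pm m y))}"
    hence i: "i < n*m" by simp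
    note b = div_mod_bounds[OF i]
    show "kron n m (Pm n x) (Pm m y) $$ (i, i) = 1"
      using i b epoly_monic by simp
  qed
  finally show ?thesis .
qed

lemma det_kron_T:
  shows "det (t \<cdot>\<^sub>m 1\<^sub>m (n*m) - kron n m (Tm n x) (Tm m y)) = (\<Prod>u\<in>{0..<n*m}. t - x (u div m + 1) * y (u mod m + 1))"
proof -
  let ?M = "t \<cdot>\<^sub>m 1\<^sub>m (n*m) - kron n m (Tm n x) (Tm m y)"
  have "det ?M = prod_list (diag_mat ?M)"
  proof (rule det_lower_triangular[of "n*m"])
    fix i j assume ij: "i < j" "j < n*m"
    hence i: "i < n*m" and j: "j < n*m" by auto
    note b = div_mod_bounds[OF i] div_mod_bounds[OF j]
    have "kron n m (Tm n x) (Tm m y) $$ (i,j) = 0"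
    using divmod_lt[OF ij(1), of m]
    proof
      assume "i div m < j div m"
      then show ?thesis using i j b by simp
    next
      assume "i div m = j div m \<and> i mod m < j mod m"
      then show ?thesis using i j b by simp
    qed
    then show "?M $$ (i, j) = 0"
      using i j ij(1) by simp
  qed (auto intro!: minus_carrier_mat)
  also have "\<dots> = (\<Prod>u\<in>{0..<n*m}. t - x (u div m + 1) * y (u mod m + 1))"
    unfolding prod_list_diag_prod
  proof (rule prod.cong)
    fix i assume "i \<in> {0..<n*m}"
    hence i: "i < n*m" by simp
    note b = div_mod_bounds[OF i]
    show "?M $$ (i, i) = t - x (i div m + 1) * y (i mod m + 1)"
      using i b by simp
  qed simp
  finally show ?thesis .
qed


lemma charpoly_kron:
  assumes m: "m > 0"
  shows "det (t \<cdot>\<^sub>m 1\<^sub>m (n*m) - kron n m (Cm n x) (Cm m y)) = (\<Prod>u\<in>{0..<n*m}. t - x (u div m + 1) * y (u mod m + 1))"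
proof -
  define K where "K = kron n m (Pm n x) (Pm m y)"
  define D where "D = kron n m (Tm n x) (Tm m y)"
  define M where "M = kron n m (Cm n x) (Cm m y)"
  have K: "K \<in> carrier_mat (n*m) (n*m)" and D: "D \<in> carrier_mat (n*m) (n*m)"
    and M: "M \<in> carrier_mat (n*m) (n*m)" unfolding K_def D_def M_def by simp_all
  have I: "t \<cdot>\<^sub>m 1\<^sub>m (n*m) \<in> carrier_mat (n*m) (n*m)" by simp
  have MK: "M * K = K * D"
    unfolding M_def K_def D_def
    by (simp add: kron_mult m CP_eq)
  have "(t \<cdot>\<^sub>m 1\<^sub>m (n*m) - M) * K = t \<cdot>\<^sub>m 1\<^sub>m (n*m) * K - M * K"
    by (rule minus_mult_distrib_mat[OF I M K])
  also have "t \<cdot>\<^sub>m 1\<^sub>m (n*m) * K = t \<cdot>\<^sub>m K"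
    using K by (simp add: mult_smult_assoc_mat[of "1\<^sub>m (n*m)" "n*m" "n*m" K "n*m"])
  also have "t \<cdot>\<^sub>m K = K * (t \<cdot>\<^sub>m 1\<^sub>m (n*m))"
    using K by (simp add: mult_smult_distrib[of K "n*m" "n*m" "1\<^sub>m (n*m)" "n*m"])
  also have "K * (t \<cdot>\<^sub>m 1\<^sub>m (n*m)) - M * K = K * (t \<cdot>\<^sub>m 1\<^sub>m (n*m) - D)"
    unfolding MK by (rule mult_minus_distrib_mat[OF K I D, symmetric])
  finally have eq: "(t \<cdot>\<^sub>m 1\<^sub>m (n*m) - M) * K = K * (t \<cdot>\<^sub>m 1\<^sub>m (n*m) - D)" .
  have IM: "t \<cdot>\<^sub>m 1\<^sub>m (n*m) - M \<in> carrier_mat (n*m) (n*m)" using M by (auto intro!: minus_carrier_mat)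
  have ID: "t \<cdot>\<^sub>m 1\<^sub>m (n*m) - D \<in> carrier_mat (n*m) (n*m)" using D by (auto intro!: minus_carrier_mat)
  have dK: "det K = 1" unfolding K_def by (rule det_kron_P)
  have "det (t \<cdot>\<^sub>m 1\<^sub>m (n*m) - M) = det ((t \<cdot>\<^sub>m 1\<^sub>m (n*m) - M) * K)"
    using det_mult[OF IM K] dK by simp
  also have "\<dots> = det (t \<cdot>\<^sub>m 1\<^sub>m (n*m) - D)"
    unfolding eq using det_mult[OF K ID] dK by simp
  finally show ?thesis unfolding M_def D_def det_kron_T .
qed

definition cpoly :: "nat \<Rightarrow> nat \<Rightarrow> nat \<Rightarrow> ipoly" where
  "cpoly n a b = (if b = n-1 then (if a < n then Mul (Const (-1)) (Var (n-a)) else Const 0)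
     else if a = b+1 then Const 1 else Const 0)"

lemma cpoly_eval:
  assumes "a < n" "b < n"
  shows "ieval (esym n x) (cpoly n a b) = Cm n x $$ (a,b)"
  using assms by (simp add: cpoly_def Cm_def esym_def epoly_def)

lemma cpoly_vars: "a < n \<Longrightarrow> ivars (cpoly n a b) \<subseteq> {1..n}"
  by (auto simp: cpoly_def)

lemma prod_shift1: "(\<Prod>i=1..n. (g :: nat \<Rightarrow> 'a::comm_monoid_mult) i) = (\<Prod>a\<in>{0..<n}. g (a+1))"
  using prod.atLeast1_atMost_eq[of g n] by (simp add: atLeast0LessThan)

theorem mainTheorem5:
  fixes n m :: nat
  assumes "n \<ge> 1" and "m \<ge> 1"
  shows "\<exists>PA PB :: nat \<Rightarrow> nat \<Rightarrow> ipoly.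
     (\<forall>i<n*m. \<forall>j<n*m. ivars (PA i j) \<subseteq> {1..n} \<and> ivars (PB i j) \<subseteq> {1..m}) \<and>
     (\<forall>(x :: nat \<Rightarrow> int) (y :: nat \<Rightarrow> int) (t :: int).
        let A = mat (n*m) (n*m) (\<lambda>(i,j). ieval (esym n x) (PA i j));
            B = mat (n*m) (n*m) (\<lambda>(i,j). ieval (esym m y) (PB i j))
        in (\<Prod>i=1..n. \<Prod>j=1..m. t - x i * y j)
             = det (smult_mat t (one_mat (n*m)) - A * B))"
proof -
  have m: "m > 0" using assms by simp
  define PA where "PA r s = (if r mod m = s mod m then cpoly n (r div m) (s div m) else Const 0)" for r s
  define PB where "PB r s = (if r div m = s div m then cpoly m (r mod m) (s mod m) else Const 0)" for r s
  have vars: "\<forall>i<n*m. \<forall>j<n*m. ivars (PA i j) \<subseteq> {1..n} \<and> ivars (PB i j) \<subseteq> {1..m}"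
  proof (intro allI impI conjI)
    fix i j assume i: "i < n*m" and j: "j < n*m"
    note b = div_mod_bounds[OF i] div_mod_bounds[OF j]
    show "ivars (PA i j) \<subseteq> {1..n}" using b cpoly_vars unfolding PA_def by auto
    show "ivars (PB i j) \<subseteq> {1..m}" using b cpoly_vars unfolding PB_def by auto
  qed
  have main: "(\<Prod>i=1..n. \<Prod>j=1..m. t - x i * y j)
       = det (smult_mat t (one_mat (n*m)) - mat (n*m) (n*m) (\<lambda>(i,j). ieval (esym n x) (PA i j)) * mat (n*m) (n*m) (\<lambda>(i,j). ieval (esym m y) (PB i j)))"
    for x y :: "nat \<Rightarrow> int" and t :: int
  proof -
    have A: "mat (n*m) (n*m) (\<lambda>(i,j). ieval (esym n x) (PA i j)) = kron n m (Cm n x) (1\<^sub>m m)"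
    proof (rule eq_matI)
      fix i j assume "i < dim_row (kron n m (Cm n x) (1\<^sub>m m))" "j < dim_col (kron n m (Cm n x) (1\<^sub>m m))"
      hence i: "i < n*m" and j: "j < n*m" by auto
      note b = div_mod_bounds[OF i] div_mod_bounds[OF j]
      show "mat (n*m) (n*m) (\<lambda>(i,j). ieval (esym n x) (PA i j)) $$ (i,j) = kron n m (Cm n x) (1\<^sub>m m) $$ (i,j)"
        using i j b by (simp add: PA_def cpoly_eval)
    qed auto
    have B: "mat (n*m) (n*m) (\<lambda>(i,j). ieval (esym m y) (PB i j)) = kron n m (1\<^sub>m n) (Cm m y)"
    proof (rule eq_matI)
      fix i j assume "i < dim_row (kron n m (1\<^sub>m n) (Cm m y))" "j < dim_col (kron n m (1\<^sub>m n) (Cm m y))"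
      hence i: "i < n*m" and j: "j < n*m" by auto
      note b = div_mod_bounds[OF i] div_mod_bounds[OF j]
      show "mat (n*m) (n*m) (\<lambda>(i,j). ieval (esym m y) (PB i j)) $$ (i,j) = kron n m (1\<^sub>m n) (Cm m y) $$ (i,j)"
        using i j b by (simp add: PB_def cpoly_eval)
    qed auto
    have AB: "kron n m (Cm n x) (1\<^sub>m m) * kron n m (1\<^sub>m n) (Cm m y) = kron n m (Cm n x) (Cm m y)"
      using kron_mult[of "Cm n x" n "1\<^sub>m n" "1\<^sub>m m" m "Cm m y", OF _ _ _ _ m]
      by (simp add: right_mult_one_mat[OF Cm_carrier] left_mult_one_mat[OF Cm_carrier])
    have "(\<Prod>i=1..n. \<Prod>j=1..m. t - x i * y j) = (\<Prod>a\<in>{0..<n}. \<Prod>b\<in>{0..<m}. t - x (a+1) * y (b+1))"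
      unfolding prod_shift1 by (rule refl)
    also have "\<dots> = (\<Prod>u\<in>{0..<n*m}. t - x (u div m + 1) * y (u mod m + 1))"
      by (rule prod_split_divmod[OF m, where f = "\<lambda>a b. t - x (a+1) * y (b+1)", symmetric])
    also have "\<dots> = det (t \<cdot>\<^sub>m 1\<^sub>m (n*m) - kron n m (Cm n x) (Cm m y))"
      by (rule charpoly_kron[OF m, symmetric])
    finally show ?thesis unfolding A B AB .
  qed
  show ?thesis
    unfolding Let_def using vars main by blast
qed

end
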